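(* For every $n\in\mathbb N$, $\mathbb{T}_n$ (with the maps $\mathbb{T}_n(f)$ and supports $\operatorname{supp}^{\mathbb{T}_n}$) and $\mathbb{T}_{n+1}^-$ (with the maps $\mathbb{T}_{n+1}^-(f)$ and supports $\operatorname{supp}^{\mathbb{T}_{n+1}^-}$) are normal PO-dilators.
   Context: A quasi embedding between partial orders $X,Y$ is a function $f$ with $f(x)\leq_Y f(y)\Rightarrow x\leq_X y$; an embedding also satisfies the converse. $\mathrm{PO}$ is the category of partial orders and quasi embeddings. $[X]^{<\omega}$ denotes the finite subsets of $X$, with $[f]^{<\omega}(a)=\{f(x)\mid x\in a\}$. A PO-dilator is a functor $W:\mathrm{PO}\to\mathrm{PO}$ mapping embeddings to embeddings, with a natural transformation $\operatorname{supp}^W:W\Rightarrow[\cdot]^{<\omega}$ such that for every embedding $f:X\to Y$, $\operatorname{rng}(W(f))=\{\sigma\in W(Y)\mid\operatorname{supp}^W_Y(\sigma)\subseteq\operatorname{rng}(f)\}$. For finite $a,b\subseteq X$, $a\leq^{\mathrm{fin}}_X b$ iff every $x\in a$ has some $y\in b$ with $x\leq_X y$. $W$ is normal if $\sigma\leq_{W(X)}\tau$ implies $\operatorname{supp}^W_X(\sigma)\leq^{\mathrm{fin}}_X\operatorname{supp}^W_X(\tau)$. For a partial order $X$, $M(X)$ is the set of finite multisets $[x_0,\dots,x_{m-1}]$ with elements from $X$, ordered by $[x_0,\dots,x_{m-1}]\leq_{M(X)}[y_0,\dots,y_{k-1}]$ iff there is an injection $g$ with $x_i\leq_X y_{g(i)}$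 for all $i<m$. For $n\in\mathbb N$ and a partial order $X$, $\mathbb{T}_n(X)$ is generated by: $\overline x$ for each $x\in X$; $i\star\sigma$ for each $\sigma=[t_0,\dots,t_{m-1}]\in M(\mathbb{T}_n(X))$ and $i<n$. For $n>0$, $\mathbb{T}_n^-(X)=\{\overline x\mid x\in X\}\cup\{0\star\sigma\mid\sigma\in M(\mathbb{T}_n(X))\}$. The relation $\leq_{\mathbb{T}_n(X)}$ is defined recursively: $\overline x\leq t$ iff either $t=\overline y$ with $x\leq_X y$, or $t=j\star[t_0,\dots,t_{m-1}]$ and $\overline x\leq t_l$ for some $l<m$; $i\star\sigma\leq t$ iff either $t=i\star\tau$ with $\sigma\leq_{M(\mathbb{T}_n(X))}\tau$, or $t=j\star[t_0,\dots,t_{m-1}]$ with $j\geq i$ and $i\star\sigma\leq t_l$ for some $l<m$. This is a partial order; $\leq_{\mathbb{T}_n^-(X)}$ is its restriction to $\mathbb{T}_n^-(X)$. For a quasi embedding $f:X\to Y$, $\mathbb{T}_n(f)(\overline x)=\overline{f(x)}$ and $\mathbb{T}_n(f)(i\star[t_0,\dots,t_{m-1}])=i\star[\mathbb{T}_n(f)(t_0),\dots,\mathbb{T}_n(f)(t_{m-1})]$; $\mathbb{T}_n^-(f)$ is its restriction $\mathbb{T}_n^-(X)\to\mathbb{T}_n^-(Y)$. Supports: $\operatorname{supp}^{\mathbb{T}_n}_X(\overline x)=\{x\}$, $\operatorname{supp}^{\mathbb{T}_n}_X(i\star[t_0,\dots,t_{m-1}])=\bigcup_{l<m}\operatorname{supp}^{\mathbb{T}_n}_X(t_l)$;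 $\operatorname{supp}^{\mathbb{T}_n^-}_X$ is its restriction to $\mathbb{T}_n^-(X)$. *)

theory Defs
  imports Main "HOL-Library.Multiset" "HOL-Library.FuncSet"
begin

text \<open>A partial order X is represented by a carrier set A together with a relation le
  (only its values on A matter).\<close>

definition po :: "'a set \<Rightarrow> ('a \<Rightarrow> 'a \<Rightarrow> bool) \<Rightarrow> bool" where
  "po A le \<longleftrightarrow> (\<forall>x\<in>A. le x x)
     \<and> (\<forall>x\<in>A. \<forall>y\<in>A. le x y \<and> le y x \<longrightarrow> x = y)
     \<and> (\<forall>x\<in>A. \<forall>y\<in>A. \<forall>z\<in>A. le x y \<and> le y z \<longrightarrow> le x z)"

definition quasi_emb :: "'a set \<Rightarrow> ('a \<Rightarrow> 'a \<Rightarrow> bool) \<Rightarrow> 'b set \<Rightarrow> ('b \<Rightarrow> 'b \<Rightarrow> bool)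
    \<Rightarrow> ('a \<Rightarrow> 'b) \<Rightarrow> bool" where
  "quasi_emb A leA B leB f \<longleftrightarrow> f \<in> A \<rightarrow> B \<and> (\<forall>x\<in>A. \<forall>y\<in>A. leB (f x) (f y) \<longrightarrow> leA x y)"

definition emb :: "'a set \<Rightarrow> ('a \<Rightarrow> 'a \<Rightarrow> bool) \<Rightarrow> 'b set \<Rightarrow> ('b \<Rightarrow> 'b \<Rightarrow> bool)
    \<Rightarrow> ('a \<Rightarrow> 'b) \<Rightarrow> bool" where
  "emb A leA B leB f \<longleftrightarrow> quasi_emb A leA B leB f \<and> (\<forall>x\<in>A. \<forall>y\<in>A. leA x y \<longrightarrow> leB (f x) (f y))"

definition fin_le :: "('a \<Rightarrow> 'a \<Rightarrow> bool) \<Rightarrow> 'a set \<Rightarrow> 'a set \<Rightarrow> bool" where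
  "fin_le le a b \<longleftrightarrow> (\<forall>x\<in>a. \<exists>y\<in>b. le x y)"

text \<open>Since HOL definitions cannot take polymorphic arguments, the conditions are stated for
  a functor given by its instances at three (arbitrary) types 'a, 'b, 'c:
  object part W (carrier) and Wle (order), support supp, and the morphism part at the
  types 'a\<rightarrow>'a, 'a\<rightarrow>'b, 'b\<rightarrow>'c, 'a\<rightarrow>'c.  Morphisms of PO are quasi embeddings between
  partial orders, considered as functions on the carrier.\<close>

definition normal_PO_dilator ::
  "('a set \<Rightarrow> 'x set) \<Rightarrow> (('a \<Rightarrow> 'a \<Rightarrow> bool) \<Rightarrow> 'x \<Rightarrow> 'x \<Rightarrow> bool) \<Rightarrow> ('x \<Rightarrow> 'a set)
   \<Rightarrow> ('b set \<Rightarrow> 'y set) \<Rightarrow> (('b \<Rightarrow> 'b \<Rightarrow> bool) \<Rightarrow> 'y \<Rightarrow> 'y \<Rightarrow> bool) \<Rightarrow> ('y \<Rightarrow> 'b set)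
   \<Rightarrow> (('a \<Rightarrow> 'a) \<Rightarrow> 'x \<Rightarrow> 'x) \<Rightarrow> (('a \<Rightarrow> 'b) \<Rightarrow> 'x \<Rightarrow> 'y) \<Rightarrow> (('b \<Rightarrow> 'c) \<Rightarrow> 'y \<Rightarrow> 'z)
   \<Rightarrow> (('a \<Rightarrow> 'c) \<Rightarrow> 'x \<Rightarrow> 'z) \<Rightarrow> bool" where
  "normal_PO_dilator Wa Wlea suppa Wb Wleb suppb Faa Fab Fbc Fac \<longleftrightarrow>
     \<comment> \<open>W maps partial orders to partial orders\<close>
     (\<forall>A leA. po A leA \<longrightarrow> po (Wa A) (Wlea leA))
     \<comment> \<open>W maps quasi embeddings to quasi embeddings\<close>
   \<and> (\<forall>A leA B leB f. po A leA \<and> po B leB \<and> quasi_emb A leA B leB f \<longrightarrow>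
        quasi_emb (Wa A) (Wlea leA) (Wb B) (Wleb leB) (Fab f))
     \<comment> \<open>W(f) depends only on f as a map on the carrier\<close>
   \<and> (\<forall>A leA B leB f g. po A leA \<and> po B leB \<and> quasi_emb A leA B leB f
        \<and> quasi_emb A leA B leB g \<and> (\<forall>x\<in>A. f x = g x) \<longrightarrow> (\<forall>\<sigma>\<in>Wa A. Fab f \<sigma> = Fab g \<sigma>))
     \<comment> \<open>functoriality: identities\<close>
   \<and> (\<forall>A leA. po A leA \<longrightarrow> (\<forall>\<sigma>\<in>Wa A. Faa id \<sigma> = \<sigma>))
     \<comment> \<open>functoriality: composition\<close>
   \<and> (\<forall>A leA B leB C leC f g. po A leA \<and> po B leB \<and> po C leC
        \<and> quasi_emb A leA B leB f \<and> quasi_emb B leB C leC g \<longrightarrow>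
        (\<forall>\<sigma>\<in>Wa A. Fac (g \<circ> f) \<sigma> = Fbc g (Fab f \<sigma>)))
     \<comment> \<open>W maps embeddings to embeddings\<close>
   \<and> (\<forall>A leA B leB f. po A leA \<and> po B leB \<and> emb A leA B leB f \<longrightarrow>
        emb (Wa A) (Wlea leA) (Wb B) (Wleb leB) (Fab f))
     \<comment> \<open>supp_X : W(X) \<rightarrow> [X]^<omega>\<close>
   \<and> (\<forall>A leA. po A leA \<longrightarrow> (\<forall>\<sigma>\<in>Wa A. finite (suppa \<sigma>) \<and> suppa \<sigma> \<subseteq> A))
     \<comment> \<open>naturality of supp\<close>
   \<and> (\<forall>A leA B leB f. po A leA \<and> po B leB \<and> quasi_emb A leA B leB f \<longrightarrow>
        (\<forall>\<sigma>\<in>Wa A. suppb (Fab f \<sigma>) = f ` suppa \<sigma>))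
     \<comment> \<open>support condition\<close>
   \<and> (\<forall>A leA B leB f. po A leA \<and> po B leB \<and> emb A leA B leB f \<longrightarrow>
        Fab f ` Wa A = {\<tau> \<in> Wb B. suppb \<tau> \<subseteq> f ` A})
     \<comment> \<open>normality\<close>
   \<and> (\<forall>A leA. po A leA \<longrightarrow> (\<forall>\<sigma>\<in>Wa A. \<forall>\<tau>\<in>Wa A. Wlea leA \<sigma> \<tau> \<longrightarrow>
        fin_le leA (suppa \<sigma>) (suppa \<tau>)))"

definition mle :: "('a \<Rightarrow> 'a \<Rightarrow> bool) \<Rightarrow> 'a multiset \<Rightarrow> 'a multiset \<Rightarrow> bool" where
  "mle R \<sigma> \<tau> \<longleftrightarrow> (\<exists>xs ys g. mset xs = \<sigma> \<and> mset ys = \<tau>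
      \<and> inj_on g {..<length xs} \<and> g ` {..<length xs} \<subseteq> {..<length ys}
      \<and> (\<forall>i<length xs. R (xs ! i) (ys ! g i)))"

lemma mle_mono [mono]: "R \<le> S \<Longrightarrow> mle R \<le> mle S"
proof (intro le_funI le_boolI)
  fix \<sigma> \<tau> assume RS: "R \<le> S" and "mle R \<sigma> \<tau>"
  then obtain xs ys g where h: "mset xs = \<sigma>" "mset ys = \<tau>" "inj_on g {..<length xs}"
    "g ` {..<length xs} \<subseteq> {..<length ys}" "\<forall>i<length xs. R (xs ! i) (ys ! g i)"
    unfolding mle_def by auto
  have "\<forall>i<length xs. S (xs ! i) (ys ! g i)" using h(5) RS by (auto simp: le_fun_def)
  with h show "mle S \<sigma> \<tau>" unfolding mle_def by blast
qed

text \<open>Var x is \<open>x\<close> with a bar; Node i \<sigma> is i \<star> \<sigma>.\<close>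
datatype 'a tm = Var 'a | Node nat "'a tm multiset"

inductive_set Tset :: "nat \<Rightarrow> 'a set \<Rightarrow> 'a tm set" for n :: nat and A :: "'a set" where
  Var: "x \<in> A \<Longrightarrow> Var x \<in> Tset n A"
| Node: "i < n \<Longrightarrow> (\<forall>t\<in>#\<sigma>. t \<in> Tset n A) \<Longrightarrow> Node i \<sigma> \<in> Tset n A"

text \<open>T_n^-(X), meaningful for n > 0 (used as T_{n+1}^-).\<close>
definition Tminus :: "nat \<Rightarrow> 'a set \<Rightarrow> 'a tm set" where
  "Tminus n A = {Var x | x. x \<in> A} \<union> {Node 0 \<sigma> | \<sigma>. set_mset \<sigma> \<subseteq> Tset n A}"

text \<open>The order on T_n(X) (the same recursive clauses for every n; it is only used on the
  carrier Tset n A).\<close>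
inductive tle :: "('a \<Rightarrow> 'a \<Rightarrow> bool) \<Rightarrow> 'a tm \<Rightarrow> 'a tm \<Rightarrow> bool" for le where
  var_var: "le x y \<Longrightarrow> tle le (Var x) (Var y)"
| var_node: "t \<in># \<tau> \<Longrightarrow> tle le (Var x) t \<Longrightarrow> tle le (Var x) (Node j \<tau>)"
| node_node: "mle (tle le) \<sigma> \<tau> \<Longrightarrow> tle le (Node i \<sigma>) (Node i \<tau>)"
| node_below: "i \<le> j \<Longrightarrow> t \<in># \<tau> \<Longrightarrow> tle le (Node i \<sigma>) t \<Longrightarrow> tle le (Node i \<sigma>) (Node j \<tau>)"

text \<open>T_n(f) is map_tm f and supp^{T_n} is set_tm (both generated by the datatype package;
  set_tm (Node i \<sigma>) is the union of set_tm over the elements of \<sigma>).\<close>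

end

theory Submission
  imports Defs
begin

lemma mle_iff: "mle R \<sigma> \<tau> \<longleftrightarrow> (\<exists>\<tau>'. \<tau>' \<subseteq># \<tau> \<and> rel_mset R \<sigma> \<tau>')"
proof
  assume "mle R \<sigma> \<tau>"
  then obtain xs ys g where h: "mset xs = \<sigma>" "mset ys = \<tau>" "inj_on g {..<length xs}"
    "g ` {..<length xs} \<subseteq> {..<length ys}" "\<forall>i<length xs. R (xs ! i) (ys ! g i)"
    unfolding mle_def by auto
  define idx where "idx = map g [0..<length xs]"
  define ys' where "ys' = map (nth ys) idx"
  have la: "list_all2 R xs ys'" using h(5) by (auto simp: list_all2_conv_all_nth ys'_def idx_def)
  have dist: "distinct idx" using h(3) by (simp add: idx_def distinct_map lessThan_atLeast0)
  have "mset idx = mset_set (set idx)" using dist by (simp add: mset_set_set)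
  also have "\<dots> \<subseteq># mset_set {0..<length ys}"
    using h(4) by (intro subset_imp_msubset_mset_set) (auto simp: idx_def image_subset_iff)
  also have "\<dots> = mset [0..<length ys]" by (simp add: mset_set_set[symmetric])
  finally have "image_mset (nth ys) (mset idx) \<subseteq># image_mset (nth ys) (mset [0..<length ys])"
    by (rule image_mset_subseteq_mono)
  moreover have "image_mset (nth ys) (mset [0..<length ys]) = mset ys"
    by (metis map_nth mset_map)
  ultimately have "mset ys' \<subseteq># \<tau>" using h(2) by (simp add: ys'_def)
  moreover have "rel_mset R \<sigma> (mset ys')" using la h(1) unfolding rel_mset_def by blast
  ultimately show "\<exists>\<tau>'. \<tau>' \<subseteq># \<tau> \<and> rel_mset R \<sigma> \<tau>'" by blast
next
  assume "\<exists>\<tau>'. \<tau>' \<subseteq># \<tau> \<and> rel_mset R \<sigma> \<tau>'"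
  then obtain \<tau>' \<rho> where t: "\<tau> = \<tau>' + \<rho>" and r: "rel_mset R \<sigma> \<tau>'"
    by (auto simp: subset_mset.le_iff_add)
  obtain xs ys' where x: "mset xs = \<sigma>" "mset ys' = \<tau>'" "list_all2 R xs ys'"
    using r unfolding rel_mset_def by blast
  obtain zs where z: "mset zs = \<rho>" using ex_mset by blast
  have "mset (ys' @ zs) = \<tau>" using x z t by simp
  moreover have "\<forall>i<length xs. R (xs ! i) ((ys' @ zs) ! id i)"
    using x(3) by (auto simp: list_all2_conv_all_nth nth_append)
  moreover have "id ` {..<length xs} \<subseteq> {..<length (ys' @ zs)}"
    using x(3) by (auto simp: list_all2_conv_all_nth)
  ultimately show "mle R \<sigma> \<tau>" unfolding mle_def using x(1)
    by (intro exI[of _ xs] exI[of _ "ys' @ zs"] exI[of _ id]) auto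
qed

lemma rel_mset_split:
  "rel_mset S (A + B) C \<Longrightarrow> \<exists>C1 C2. C = C1 + C2 \<and> rel_mset S A C1 \<and> rel_mset S B C2"
proof (induction A arbitrary: C)
  case empty
  then show ?case by (intro exI[of _ "{#}"] exI[of _ C]) (auto simp: rel_mset_Zero)
next
  case (add a A)
  from add.prems have "rel_mset S (add_mset a (A + B)) C" by simp
  from msed_rel_invL[OF this] obtain N1 b where
    n: "C = add_mset b N1" "S a b" "rel_mset S (A + B) N1" by blast
  from add.IH[OF n(3)] obtain C1 C2 where "N1 = C1 + C2" "rel_mset S A C1" "rel_mset S B C2"
    by blast
  then show ?case using n by (intro exI[of _ "add_mset b C1"] exI[of _ C2]) (auto intro: rel_mset_Plus)
qed

lemma subset_image_mset:
  "\<tau>' \<subseteq># image_mset g \<tau> \<Longrightarrow> \<exists>\<tau>0. \<tau>0 \<subseteq># \<tau> \<and> \<tau>' = image_mset g \<tau>0"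
proof (induction \<tau> arbitrary: \<tau>')
  case empty
  then show ?case by auto
next
  case (add x \<tau>)
  show ?case
  proof (cases "g x \<in># \<tau>'")
    case True
    then obtain \<rho> where r: "\<tau>' = add_mset (g x) \<rho>" by (metis multi_member_split)
    with add.prems have "\<rho> \<subseteq># image_mset g \<tau>" by simp
    from add.IH[OF this] obtain \<tau>0 where "\<tau>0 \<subseteq># \<tau>" "\<rho> = image_mset g \<tau>0" by blast
    then show ?thesis using r by (intro exI[of _ "add_mset x \<tau>0"]) auto
  next
    case False
    have "\<tau>' \<subseteq># image_mset g \<tau>"
      unfolding subseteq_mset_def
    proof
      fix y
      have "count \<tau>' y \<le> count (add_mset (g x) (image_mset g \<tau>)) y"
        using add.prems by (simp add: subseteq_mset_def)
      then show "count \<tau>' y \<le> count (image_mset g \<tau>) y"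
        using False by (cases "y = g x") (auto simp: not_in_iff)
    qed
    from add.IH[OF this] obtain \<tau>0 where "\<tau>0 \<subseteq># \<tau>" "\<tau>' = image_mset g \<tau>0" by blast
    then show ?thesis by (intro exI[of _ \<tau>0]) (auto intro: subset_mset.order_trans)
  qed
qed

lemma mle_mono_strong:
  assumes "mle R \<sigma> \<tau>" "\<And>a b. a \<in># \<sigma> \<Longrightarrow> b \<in># \<tau> \<Longrightarrow> R a b \<Longrightarrow> S a b"
  shows "mle S \<sigma> \<tau>"
proof -
  obtain \<tau>' where t: "\<tau>' \<subseteq># \<tau>" "rel_mset R \<sigma> \<tau>'" using assms(1) mle_iff by blast
  have "rel_mset S \<sigma> \<tau>'"
    using t by (rule_tac multiset.rel_mono_strong[OF t(2)]) (auto intro: assms(2) dest: mset_subset_eqD)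
  then show ?thesis using t(1) mle_iff by blast
qed

lemma mle_elem: "mle R \<sigma> \<tau> \<Longrightarrow> a \<in># \<sigma> \<Longrightarrow> \<exists>b\<in>#\<tau>. R a b"
proof -
  assume "mle R \<sigma> \<tau>" "a \<in># \<sigma>"
  then obtain \<tau>' where t: "\<tau>' \<subseteq># \<tau>" "rel_mset R \<sigma> \<tau>'" using mle_iff by blast
  obtain \<sigma>' where "\<sigma> = add_mset a \<sigma>'" using \<open>a \<in># \<sigma>\<close> by (metis multi_member_split)
  with t(2) obtain N b where "\<tau>' = add_mset b N" "R a b" using msed_rel_invL[of R a \<sigma>' \<tau>'] by blast
  then show ?thesis using t(1) by (auto dest: mset_subset_eqD)
qed

lemma mle_trans:
  assumes "mle R \<sigma> \<tau>" "mle S \<tau> \<rho>"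
    "\<And>a b c. a \<in># \<sigma> \<Longrightarrow> b \<in># \<tau> \<Longrightarrow> c \<in># \<rho> \<Longrightarrow> R a b \<Longrightarrow> S b c \<Longrightarrow> T a c"
  shows "mle T \<sigma> \<rho>"
proof -
  obtain \<tau>1 where t1: "\<tau>1 \<subseteq># \<tau>" "rel_mset R \<sigma> \<tau>1" using assms(1) mle_iff by blast
  obtain \<tau>2 where t2: "\<tau> = \<tau>1 + \<tau>2" using t1(1) by (auto simp: subset_mset.le_iff_add)
  obtain \<rho>1 where r1: "\<rho>1 \<subseteq># \<rho>" "rel_mset S \<tau> \<rho>1" using assms(2) mle_iff by blast
  obtain C1 C2 where c: "\<rho>1 = C1 + C2" "rel_mset S \<tau>1 C1" using rel_mset_split r1(2) t2 by blast
  have C1: "C1 \<subseteq># \<rho>" using c(1) r1(1) by (metis mset_subset_eq_add_left subset_mset.order_trans)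
  have a: "rel_mset (\<lambda>a b. R a b \<and> a \<in># \<sigma> \<and> b \<in># \<tau>) \<sigma> \<tau>1"
    by (rule multiset.rel_mono_strong[OF t1(2)]) (use t1(1) in \<open>auto dest: mset_subset_eqD\<close>)
  have b: "rel_mset (\<lambda>b c. S b c \<and> b \<in># \<tau> \<and> c \<in># \<rho>) \<tau>1 C1"
    by (rule multiset.rel_mono_strong[OF c(2)]) (use t1(1) C1 in \<open>auto dest: mset_subset_eqD\<close>)
  have "rel_mset ((\<lambda>a b. R a b \<and> a \<in># \<sigma> \<and> b \<in># \<tau>) OO (\<lambda>b c. S b c \<and> b \<in># \<tau> \<and> c \<in># \<rho>)) \<sigma> C1"
    unfolding multiset.rel_compp using a b by blast
  hence "rel_mset T \<sigma> C1"
    by (rule multiset.rel_mono_strong) (auto intro: assms(3))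
  then show ?thesis using C1 mle_iff by blast
qed

lemma mle_map: "mle R (image_mset f \<sigma>) (image_mset g \<tau>) \<longleftrightarrow> mle (\<lambda>a b. R (f a) (g b)) \<sigma> \<tau>"
proof
  assume "mle R (image_mset f \<sigma>) (image_mset g \<tau>)"
  then obtain \<tau>' where t: "\<tau>' \<subseteq># image_mset g \<tau>" "rel_mset R (image_mset f \<sigma>) \<tau>'"
    using mle_iff by blast
  obtain \<tau>0 where "\<tau>0 \<subseteq># \<tau>" "\<tau>' = image_mset g \<tau>0" using subset_image_mset[OF t(1)] by blast
  then show "mle (\<lambda>a b. R (f a) (g b)) \<sigma> \<tau>" using t(2) mle_iff
    by (auto simp: multiset.rel_map)
next
  assume "mle (\<lambda>a b. R (f a) (g b)) \<sigma> \<tau>"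
  then obtain \<tau>' where t: "\<tau>' \<subseteq># \<tau>" "rel_mset (\<lambda>a b. R (f a) (g b)) \<sigma> \<tau>'"
    using mle_iff by blast
  then have "image_mset g \<tau>' \<subseteq># image_mset g \<tau>" "rel_mset R (image_mset f \<sigma>) (image_mset g \<tau>')"
    by (auto simp: multiset.rel_map image_mset_subseteq_mono)
  then show "mle R (image_mset f \<sigma>) (image_mset g \<tau>)" using mle_iff by blast
qed

lemma mle_refl: "(\<And>a. a \<in># \<sigma> \<Longrightarrow> R a a) \<Longrightarrow> mle R \<sigma> \<sigma>"
  using mle_iff multiset.rel_refl_strong by blast

lemma mle_size: "mle R \<sigma> \<tau> \<Longrightarrow> size \<sigma> \<le> size \<tau>"
  using mle_iff rel_mset_size size_mset_mono by metis

lemma rel_mset_filter_le: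
  "rel_mset R \<sigma> \<tau> \<Longrightarrow> (\<And>a b. a \<in> U \<Longrightarrow> R a b \<Longrightarrow> b \<in> U)
   \<Longrightarrow> size (filter_mset (\<lambda>x. x \<in> U) \<sigma>) \<le> size (filter_mset (\<lambda>x. x \<in> U) \<tau>)"
  by (induction rule: rel_mset_induct) auto

lemma rel_mset_antisym:
  assumes r1: "rel_mset R \<sigma> \<tau>" and r2: "rel_mset R \<tau> \<sigma>"
    and S: "set_mset \<sigma> \<subseteq> S" "set_mset \<tau> \<subseteq> S"
    and refl: "\<And>a. a \<in> S \<Longrightarrow> R a a"
    and anti: "\<And>a b. a \<in> S \<Longrightarrow> b \<in> S \<Longrightarrow> R a b \<Longrightarrow> R b a \<Longrightarrow> a = b"
    and trans: "\<And>a b c. a \<in> S \<Longrightarrow> b \<in> S \<Longrightarrow> c \<in> S \<Longrightarrow> R a b \<Longrightarrow> R b c \<Longrightarrow> R a c"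
  shows "\<sigma> = \<tau>"
proof (rule multiset_eqI)
  fix a
  define R' where "R' = (\<lambda>a b. R a b \<and> a \<in> S \<and> b \<in> S)"
  have r1': "rel_mset R' \<sigma> \<tau>"
    by (rule multiset.rel_mono_strong[OF r1]) (use S in \<open>auto simp: R'_def\<close>)
  have r2': "rel_mset R' \<tau> \<sigma>"
    by (rule multiset.rel_mono_strong[OF r2]) (use S in \<open>auto simp: R'_def\<close>)
  show "count \<sigma> a = count \<tau> a"
  proof (cases "a \<in> S")
    case False
    then show ?thesis using S by (metis count_eq_zero_iff subsetD)
  next
    case True
    define U1 where "U1 = {b \<in> S. R a b}"
    define U2 where "U2 = {b \<in> S. R a b \<and> b \<noteq> a}"
    have u1: "\<And>c d. c \<in> U1 \<Longrightarrow> R' c d \<Longrightarrow> d \<in> U1"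
      unfolding U1_def R'_def using trans True by blast
    have u2: "\<And>c d. c \<in> U2 \<Longrightarrow> R' c d \<Longrightarrow> d \<in> U2"
      unfolding U2_def R'_def using trans True anti by blast
    have e1: "size (filter_mset (\<lambda>x. x \<in> U1) \<sigma>) = size (filter_mset (\<lambda>x. x \<in> U1) \<tau>)"
      using rel_mset_filter_le[of R' \<sigma> \<tau> U1, OF r1'] rel_mset_filter_le[of R' \<tau> \<sigma> U1, OF r2'] u1 by (meson le_antisym)
    have e2: "size (filter_mset (\<lambda>x. x \<in> U2) \<sigma>) = size (filter_mset (\<lambda>x. x \<in> U2) \<tau>)"
      using rel_mset_filter_le[of R' \<sigma> \<tau> U2, OF r1'] rel_mset_filter_le[of R' \<tau> \<sigma> U2, OF r2'] u2 by (meson le_antisym)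
    have split: "filter_mset (\<lambda>x. x \<in> U1) M = filter_mset (\<lambda>x. x \<in> U2) M + filter_mset (\<lambda>x. x = a) M"
      if "set_mset M \<subseteq> S" for M
    proof (rule multiset_eqI)
      fix x show "count (filter_mset (\<lambda>x. x \<in> U1) M) x = count (filter_mset (\<lambda>x. x \<in> U2) M + filter_mset (\<lambda>x. x = a) M) x"
        using that refl[OF True] by (cases "x \<in># M") (auto simp: U1_def U2_def not_in_iff)
    qed
    show ?thesis using split[OF S(1)] split[OF S(2)] e1 e2
      by (simp add: count_conv_size_mset)
  qed
qed

lemma rel_mset_size_multiset:
  "rel_mset R M N \<Longrightarrow> (\<And>a b. R a b \<Longrightarrow> f a \<le> f b) \<Longrightarrow> size_multiset f M \<le> size_multiset f N"
  by (induction rule: rel_mset_induct) (auto simp: add_mono)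

lemma mle_size_multiset:
  assumes "mle R \<sigma> \<tau>" "\<And>a b. a \<in># \<sigma> \<Longrightarrow> b \<in># \<tau> \<Longrightarrow> R a b \<Longrightarrow> f a \<le> f b"
  shows "size_multiset f \<sigma> \<le> size_multiset f \<tau>"
proof -
  have "mle (\<lambda>a b. f a \<le> f b) \<sigma> \<tau>" using assms by (rule mle_mono_strong)
  then obtain \<tau>' where t: "\<tau>' \<subseteq># \<tau>" "rel_mset (\<lambda>a b. f a \<le> f b) \<sigma> \<tau>'" using mle_iff by blast
  from t(2) have "size_multiset f \<sigma> \<le> size_multiset f \<tau>'"
    by (rule rel_mset_size_multiset) auto
  also have "\<dots> \<le> size_multiset f \<tau>" using t(1) by (auto simp: subset_mset.le_iff_add)
  finally show ?thesis .
qed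

lemma size_mem: "t \<in># \<tau> \<Longrightarrow> size t < size (Node j \<tau>)"
proof -
  assume "t \<in># \<tau>"
  then obtain \<tau>' where "\<tau> = add_mset t \<tau>'" by (metis multi_member_split)
  then show ?thesis by simp
qed

lemma tle_size: "tle le s t \<Longrightarrow> size s \<le> size t"
proof (induction rule: tle.induct)
  case (node_node \<sigma> \<tau> i)
  have "size_multiset size \<sigma> \<le> size_multiset size \<tau>"
    using node_node by (rule mle_size_multiset) auto
  then show ?case by simp
next
  case (var_node t \<tau> x j)
  then show ?case using size_mem[of t \<tau> j] by simp
next
  case (node_below i j t \<tau> \<sigma>)
  then show ?case using size_mem[of t \<tau> j] by simp
qed simp

lemma tle_Var_right: assumes "tle le s (Var y)" shows "\<exists>x. s = Var x \<and> le x y"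
  using assms by (cases rule: tle.cases) auto

lemma tle_Node_Var: "\<not> tle le (Node i \<sigma>) (Var y)"
  using tle_Var_right by fastforce

lemma set_tm_mem: "t \<in># \<tau> \<Longrightarrow> set_tm t \<subseteq> set_tm (Node j \<tau>)"
  by auto

lemma tle_refl: "(\<And>x. x \<in> set_tm t \<Longrightarrow> le x x) \<Longrightarrow> tle le t t"
proof (induction t)
  case (Var x)
  then show ?case by (auto intro: tle.var_var)
next
  case (Node i \<sigma>)
  have "mle (tle le) \<sigma> \<sigma>" by (rule mle_refl) (use Node in auto)
  then show ?case by (rule tle.node_node)
qed

lemma tle_Node_left_idx: assumes "tle le (Node i \<sigma>) t" shows "\<exists>j \<tau>. t = Node j \<tau> \<and> i \<le> j"
  using assms by (cases rule: tle.cases) auto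

lemma tle_NodeR:
  assumes "tle le s (Node k \<rho>)"
  obtains (vn) x r where "s = Var x" "r \<in># \<rho>" "tle le (Var x) r"
  | (nn) \<tau> where "s = Node k \<tau>" "mle (tle le) \<tau> \<rho>"
  | (nb) j \<tau> r where "s = Node j \<tau>" "j \<le> k" "r \<in># \<rho>" "tle le (Node j \<tau>) r"
  using assms by (cases rule: tle.cases) auto

lemma tle_trans:
  assumes tr: "\<forall>x\<in>A. \<forall>y\<in>A. \<forall>z\<in>A. le x y \<longrightarrow> le y z \<longrightarrow> le x z"
  shows "set_tm u \<subseteq> A \<Longrightarrow> set_tm s \<subseteq> A \<Longrightarrow> set_tm t \<subseteq> A \<Longrightarrow> tle le s t \<Longrightarrow> tle le t u \<Longrightarrow> tle le s u"
proof (induction u arbitrary: s t)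
  case (Var z)
  obtain y where y: "t = Var y" "le y z" using tle_Var_right[OF Var.prems(5)] by blast
  obtain x where x: "s = Var x" "le x y" using tle_Var_right[of le s y] Var.prems(4) y(1) by blast
  have "x \<in> A" "y \<in> A" "z \<in> A" using x(1) y(1) Var.prems(1-3) by auto
  then have "le x z" using tr[rule_format, of x y z] x y by blast
  then show ?case using x by (auto intro!: tle.var_var)
next
  case (Node k \<rho>)
  note sA = Node.prems(2) and tA = Node.prems(3) and st = Node.prems(4)
  have IH: "tle le s' r" if "r \<in># \<rho>" "set_tm s' \<subseteq> A" "set_tm t' \<subseteq> A" "tle le s' t'" "tle le t' r" for r s' t'
  proof -
    have rA: "set_tm r \<subseteq> A" using Node.prems(1) that(1) by auto
    show ?thesis by (rule Node.IH[OF that(1) rA that(2-5)])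
  qed
  from Node.prems(5) show ?case
  proof (cases rule: tle_NodeR)
    case (vn y r)
    obtain x where x: "s = Var x" using st vn(1) tle_Var_right[of le s y] by blast
    have "tle le s r" using IH[of r s t] vn sA tA st by blast
    then show ?thesis using x vn(2) by (auto intro: tle.var_node)
  next
    case (nn \<tau>)
    note tu = nn
    have tA': "set_tm t' \<subseteq> A" if "t' \<in># \<tau>" for t' using tA that tu(1) by auto
    from st[unfolded tu(1)] show ?thesis
    proof (cases rule: tle_NodeR)
      case (vn x t')
      obtain r where r: "r \<in># \<rho>" "tle le t' r" using mle_elem[OF tu(2) vn(2)] by blast
      have "tle le s r" using IH[of r s t'] r vn(1,3) sA tA'[OF vn(2)] by blast
      then show ?thesis using r(1) vn(1) by (auto intro: tle.var_node)
    next
      case (nn \<sigma>)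
      have "mle (tle le) \<sigma> \<rho>"
      proof (rule mle_trans)
        show "mle (tle le) \<sigma> \<tau>" using nn(2) .
        show "mle (tle le) \<tau> \<rho>" using tu(2) .
        fix a b c assume abc: "a \<in># \<sigma>" "b \<in># \<tau>" "c \<in># \<rho>" "tle le a b" "tle le b c"
        have "set_tm a \<subseteq> A" using sA abc(1) nn(1) by auto
        moreover have "set_tm b \<subseteq> A" using tA' abc(2) by auto
        ultimately show "tle le a c" using IH[of c a b] abc by blast
      qed
      then show ?thesis using nn(1) by (auto intro: tle.node_node)
    next
      case (nb i \<sigma> t')
      obtain r where r: "r \<in># \<rho>" "tle le t' r" using mle_elem[OF tu(2) nb(3)] by blast
      have "tle le s r" using IH[of r s t'] r nb(1,4) sA tA'[OF nb(3)] by blast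
      then show ?thesis using r(1) nb(1,2) by (auto intro: tle.node_below)
    qed
  next
    case (nb j \<tau> r)
    have sr: "tle le s r" using IH[of r s t] nb(3,4) sA tA st nb(1) by blast
    show ?thesis
    proof (cases s)
      case (Var x)
      then show ?thesis using sr nb(3) by (auto intro: tle.var_node)
    next
      case (Node i \<sigma>)
      then have "i \<le> j" using tle_Node_left_idx[of le i \<sigma> t] st nb(1) by auto
      then show ?thesis using sr nb(2,3) Node by (auto intro: tle.node_below)
    qed
  qed
qed

lemma tle_NodeL_strict:
  assumes "tle le (Node i \<sigma>) t" "size t \<le> size (Node i \<sigma>)"
  shows "\<exists>\<tau>. t = Node i \<tau> \<and> mle (tle le) \<sigma> \<tau>"
  using assms(1)
proof (cases rule: tle.cases)
  case (node_below j t' \<tau>)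
  have "size (Node i \<sigma>) \<le> size t'" using tle_size node_below(4) by blast
  moreover have "size t' < size t" using size_mem node_below by blast
  ultimately show ?thesis using assms(2) by simp
qed auto

lemma subeq_size_eq: "A \<subseteq># B \<Longrightarrow> size B \<le> size A \<Longrightarrow> A = B"
proof -
  assume "A \<subseteq># B" "size B \<le> size A"
  then obtain C where "B = A + C" by (auto simp: subset_mset.le_iff_add)
  with \<open>size B \<le> size A\<close> show "A = B" by simp
qed

lemma tle_antisym:
  assumes refl: "\<forall>x\<in>A. le x x"
    and anti: "\<forall>x\<in>A. \<forall>y\<in>A. le x y \<longrightarrow> le y x \<longrightarrow> x = y"
    and tr: "\<forall>x\<in>A. \<forall>y\<in>A. \<forall>z\<in>A. le x y \<longrightarrow> le y z \<longrightarrow> le x z"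
  shows "set_tm s \<subseteq> A \<Longrightarrow> set_tm t \<subseteq> A \<Longrightarrow> tle le s t \<Longrightarrow> tle le t s \<Longrightarrow> s = t"
proof (induction "size s" arbitrary: s t rule: less_induct)
  case less
  show ?case
  proof (cases s)
    case (Var x)
    obtain y where y: "t = Var y" "le y x" using tle_Var_right[of le t x] less.prems(4) Var by auto
    have "tle le (Var x) (Var y)" using less.prems(3) Var y(1) by simp
    then have "le x y" using tle_Var_right[of le "Var x" y] by auto
    then show ?thesis using anti[rule_format, of x y] y Var less.prems(1,2) by auto
  next
    case (Node i \<sigma>)
    have eq: "size s = size t" using tle_size[OF less.prems(3)] tle_size[OF less.prems(4)] by simp
    obtain \<tau> where t: "t = Node i \<tau>" "mle (tle le) \<sigma> \<tau>"
      using tle_NodeL_strict[of le i \<sigma> t] less.prems(3) eq Node by auto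
    have m2: "mle (tle le) \<tau> \<sigma>"
      using tle_NodeL_strict[of le i \<tau> s] less.prems(4) eq Node t(1) by auto
    obtain \<tau>' where t1: "\<tau>' \<subseteq># \<tau>" "rel_mset (tle le) \<sigma> \<tau>'" using t(2) mle_iff by blast
    obtain \<sigma>' where s1: "\<sigma>' \<subseteq># \<sigma>" "rel_mset (tle le) \<tau> \<sigma>'" using m2 mle_iff by blast
    have "size \<tau>' = size \<sigma>" "size \<sigma>' = size \<tau>" using rel_mset_size[OF t1(2)] rel_mset_size[OF s1(2)] by auto
    moreover have "size \<tau>' \<le> size \<tau>" "size \<sigma>' \<le> size \<sigma>" using t1(1) s1(1) size_mset_mono by auto
    ultimately have "\<tau>' = \<tau>" "\<sigma>' = \<sigma>" using subeq_size_eq[OF t1(1)] subeq_size_eq[OF s1(1)] by auto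
    then have r1: "rel_mset (tle le) \<sigma> \<tau>" and r2: "rel_mset (tle le) \<tau> \<sigma>" using t1 s1 by auto
    define S where "S = set_mset \<sigma> \<union> set_mset \<tau>"
    have SA: "set_tm a \<subseteq> A" if "a \<in> S" for a
      using that less.prems(1,2) Node t(1) by (auto simp: S_def)
    have Ssize: "size a < size s" if "a \<in> S" for a
      using that size_mem[of a \<sigma> i] size_mem[of a \<tau> i] Node t(1) eq by (auto simp: S_def)
    have "\<sigma> = \<tau>"
    proof (rule rel_mset_antisym[OF r1 r2, of S])
      show "set_mset \<sigma> \<subseteq> S" "set_mset \<tau> \<subseteq> S" by (auto simp: S_def)
      fix a assume "a \<in> S"
      then show "tle le a a" using SA refl by (intro tle_refl) blast
    next
      fix a b assume "a \<in> S" "b \<in> S" "tle le a b" "tle le b a"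
      then show "a = b" using less.hyps[OF Ssize] SA by blast
    next
      fix a b c assume abc: "a \<in> S" "b \<in> S" "c \<in> S" "tle le a b" "tle le b c"
      show "tle le a c" using tle_trans[OF tr, of c a b] SA[of a] SA[of b] SA[of c] abc by blast
    qed
    then show ?thesis using Node t(1) by simp
  qed
qed

lemma tle_map:
  "tle le s t \<Longrightarrow> (\<forall>x\<in>set_tm s. \<forall>y\<in>set_tm t. le x y \<longrightarrow> leB (f x) (f y))
   \<Longrightarrow> tle leB (map_tm f s) (map_tm f t)"
proof (induction rule: tle.induct)
  case (var_var x y)
  then show ?case by (auto intro: tle.var_var)
next
  case (var_node t \<tau> x j)
  then have "tle leB (map_tm f (Var x)) (map_tm f t)" by auto
  moreover have "map_tm f t \<in># image_mset (map_tm f) \<tau>" using var_node(1) by simp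
  ultimately show ?case using tle.var_node[of "map_tm f t" "image_mset (map_tm f) \<tau>" leB "f x" j] by simp
next
  case (node_node \<sigma> \<tau> i)
  have "mle (tle leB) (image_mset (map_tm f) \<sigma>) (image_mset (map_tm f) \<tau>)"
    unfolding mle_map
    by (rule mle_mono_strong[OF node_node(1)]) (use node_node(2) in fastforce)
  then show ?case by (auto intro: tle.node_node)
next
  case (node_below i j t \<tau> \<sigma>)
  then have "tle leB (map_tm f (Node i \<sigma>)) (map_tm f t)" by (metis set_tm_mem subsetD)
  moreover have "map_tm f t \<in># image_mset (map_tm f) \<tau>" using node_below(2) by simp
  ultimately show ?case using node_below(1)
    tle.node_below[of i j "map_tm f t" "image_mset (map_tm f) \<tau>" leB "image_mset (map_tm f) \<sigma>"] by simp
qed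

lemma tle_reflect:
  assumes refl: "\<And>x y. x \<in> A \<Longrightarrow> y \<in> A \<Longrightarrow> leB (f x) (f y) \<Longrightarrow> le x y"
  shows "set_tm t \<subseteq> A \<Longrightarrow> set_tm s \<subseteq> A \<Longrightarrow> tle leB (map_tm f s) (map_tm f t) \<Longrightarrow> tle le s t"
proof (induction t arbitrary: s)
  case (Var y)
  then obtain x where x: "s = Var x" "leB (f x) (f y)"
    using tle_Var_right[of leB "map_tm f s" "f y"] by (cases s) auto
  then show ?case using Var refl by (auto intro: tle.var_var)
next
  case (Node k \<rho>)
  have IH: "tle le s' r" if "r \<in># \<rho>" "set_tm s' \<subseteq> A" "tle leB (map_tm f s') (map_tm f r)" for r s'
  proof -
    have rA: "set_tm r \<subseteq> A" using Node.prems(1) that(1) by auto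
    show ?thesis by (rule Node.IH[OF that(1) rA that(2,3)])
  qed
  from Node.prems(3) have "tle leB (map_tm f s) (Node k (image_mset (map_tm f) \<rho>))" by simp
  then show ?case
  proof (cases rule: tle_NodeR)
    case (vn x r')
    obtain r where r: "r \<in># \<rho>" "r' = map_tm f r" using vn(2) by auto
    obtain x0 where x0: "s = Var x0" using vn(1) by (cases s) auto
    have "tle le s r" using IH[of r s] r vn x0 Node.prems(2) by auto
    then show ?thesis using r(1) x0 by (auto intro: tle.var_node)
  next
    case (nn \<tau>')
    obtain \<sigma> where s: "s = Node k \<sigma>" "\<tau>' = image_mset (map_tm f) \<sigma>" using nn(1) by (cases s) auto
    have "mle (\<lambda>a b. tle leB (map_tm f a) (map_tm f b)) \<sigma> \<rho>"
      using nn(2) s(2) mle_map by metis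
    then have "mle (tle le) \<sigma> \<rho>"
      by (rule mle_mono_strong) (use IH Node.prems(2) s(1) in auto)
    then show ?thesis using s(1) by (auto intro: tle.node_node)
  next
    case (nb j \<tau>' r')
    obtain \<sigma> where s: "s = Node j \<sigma>" "\<tau>' = image_mset (map_tm f) \<sigma>" using nb(1) by (cases s) auto
    obtain r where r: "r \<in># \<rho>" "r' = map_tm f r" using nb(3) by auto
    have "tle le s r" using IH[of r s] r nb s Node.prems(2) by auto
    then show ?thesis using r(1) s(1) nb(2) by (auto intro: tle.node_below)
  qed
qed

lemma tle_fin_le: "tle le s t \<Longrightarrow> fin_le le (set_tm s) (set_tm t)"
proof (induction rule: tle.induct)
  case (node_node \<sigma> \<tau> i)
  show ?case unfolding fin_le_def
  proof
    fix x assume "x \<in> set_tm (Node i \<sigma>)"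
    then obtain a where a: "a \<in># \<sigma>" "x \<in> set_tm a" by auto
    obtain b where b: "b \<in># \<tau>" "fin_le le (set_tm a) (set_tm b)"
      using mle_elem[OF node_node a(1)] by auto
    then show "\<exists>y\<in>set_tm (Node i \<tau>). le x y" using a(2) unfolding fin_le_def by fastforce
  qed
next
  case (node_below i j t \<tau> \<sigma>)
  then show ?case unfolding fin_le_def by (metis set_tm_mem subsetD)
next
  case (var_node t \<tau> x j)
  then show ?case unfolding fin_le_def by (metis set_tm_mem subsetD)
qed (auto simp: fin_le_def)

lemma Tset_set: "t \<in> Tset n A \<Longrightarrow> set_tm t \<subseteq> A"
  by (induction rule: Tset.induct) auto

lemma Tset_map: assumes "f \<in> A \<rightarrow> B" "t \<in> Tset n A" shows "map_tm f t \<in> Tset n B"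
  using assms(2) by (induction rule: Tset.induct) (use assms(1) in \<open>auto intro!: Tset.intros\<close>)

lemma Tset_pre: "t \<in> Tset n B \<Longrightarrow> set_tm t \<subseteq> f ` A \<Longrightarrow> map_tm (inv_into A f) t \<in> Tset n A"
proof (induction rule: Tset.induct)
  case (Var x)
  then show ?case by (auto intro!: Tset.intros inv_into_into)
next
  case (Node i \<sigma>)
  have "\<forall>t\<in>#image_mset (map_tm (inv_into A f)) \<sigma>. t \<in> Tset n A"
  proof
    fix t assume "t \<in># image_mset (map_tm (inv_into A f)) \<sigma>"
    then obtain u where u: "u \<in># \<sigma>" "t = map_tm (inv_into A f) u" by auto
    have "set_tm u \<subseteq> f ` A" using Node.prems u(1) by auto
    then show "t \<in> Tset n A" using Node.IH u by auto
  qed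
  then show ?case using Node.hyps by (auto intro!: Tset.intros)
qed

lemma map_pre: "set_tm t \<subseteq> f ` A \<Longrightarrow> map_tm f (map_tm (inv_into A f) t) = t"
  by (simp add: tm.map_comp f_inv_into_f subset_iff tm.map_ident_strong)

lemma finite_set_tm: "finite (set_tm t)"
  by (induction t) auto

lemma po_tle:
  assumes "po A le" "\<And>t. t \<in> W \<Longrightarrow> set_tm t \<subseteq> A"
  shows "po W (tle le)"
proof -
  have refl: "\<forall>x\<in>A. le x x"
    and anti: "\<forall>x\<in>A. \<forall>y\<in>A. le x y \<longrightarrow> le y x \<longrightarrow> x = y"
    and tr: "\<forall>x\<in>A. \<forall>y\<in>A. \<forall>z\<in>A. le x y \<longrightarrow> le y z \<longrightarrow> le x z"
    using assms(1) unfolding po_def by blast+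
  show ?thesis unfolding po_def
  proof (intro conjI ballI impI)
    fix x assume "x \<in> W"
    then show "tle le x x" using assms(2) refl by (intro tle_refl) blast
  next
    fix x y assume "x \<in> W" "y \<in> W" "tle le x y \<and> tle le y x"
    then show "x = y" using tle_antisym[OF refl anti tr] assms(2) by blast
  next
    fix x y z assume "x \<in> W" "y \<in> W" "z \<in> W" "tle le x y \<and> tle le y z"
    then show "tle le x z" using tle_trans[OF tr, of z x y] assms(2) by blast
  qed
qed

lemma dilator_generic:
  fixes Wa :: "'a set \<Rightarrow> 'a tm set" and Wb :: "'b set \<Rightarrow> 'b tm set"
  assumes Wa_sub: "\<And>A t. t \<in> Wa A \<Longrightarrow> set_tm t \<subseteq> A"
    and map_ab: "\<And>A B f t. f \<in> A \<rightarrow> B \<Longrightarrow> t \<in> Wa A \<Longrightarrow> map_tm f t \<in> Wb B"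
    and pre_ba: "\<And>A B (f :: 'a \<Rightarrow> 'b) t. t \<in> Wb B \<Longrightarrow> set_tm t \<subseteq> f ` A \<Longrightarrow> map_tm (inv_into A f) t \<in> Wa A"
  shows "normal_PO_dilator Wa tle set_tm Wb tle set_tm map_tm map_tm (map_tm :: ('b \<Rightarrow> 'c) \<Rightarrow> _) map_tm"
proof -
  have qe: "quasi_emb (Wa A) (tle leA) (Wb B) (tle leB) (map_tm f)"
    if "quasi_emb A leA B leB f" for A :: "'a set" and leA and B :: "'b set" and leB and f
  proof -
    have f: "f \<in> A \<rightarrow> B" "\<And>x y. x \<in> A \<Longrightarrow> y \<in> A \<Longrightarrow> leB (f x) (f y) \<Longrightarrow> leA x y"
      using that unfolding quasi_emb_def by auto
    show ?thesis unfolding quasi_emb_def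
    proof (intro conjI ballI impI)
      show "map_tm f \<in> Wa A \<rightarrow> Wb B" using map_ab[OF f(1)] by blast
    next
      fix x y assume "x \<in> Wa A" "y \<in> Wa A" "tle leB (map_tm f x) (map_tm f y)"
      then show "tle leA x y" using tle_reflect[of A leB f leA y x] f(2) Wa_sub by blast
    qed
  qed
  show ?thesis unfolding normal_PO_dilator_def
  proof (intro conjI allI impI ballI)
    fix A :: "'a set" and leA assume "po A leA"
    then show "po (Wa A) (tle leA)" using po_tle Wa_sub by blast
  next
    fix A :: "'a set" and leA and B :: "'b set" and leB f assume "po A leA \<and> po B leB \<and> quasi_emb A leA B leB f"
    then show "quasi_emb (Wa A) (tle leA) (Wb B) (tle leB) (map_tm f)" using qe by blast
  next
    fix A :: "'a set" and leA and B :: "'b set" and leB f g \<sigma>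
    assume h: "po A leA \<and> po B leB \<and> quasi_emb A leA B leB f \<and> quasi_emb A leA B leB g \<and> (\<forall>x\<in>A. f x = g x)"
      and "\<sigma> \<in> Wa A"
    then have "set_tm \<sigma> \<subseteq> A" using Wa_sub by blast
    then show "map_tm f \<sigma> = map_tm g \<sigma>" using h by (intro tm.map_cong0) auto
  next
    fix \<sigma> :: "'a tm" show "map_tm id \<sigma> = \<sigma>" by (simp add: tm.map_id)
  next
    fix f :: "'a \<Rightarrow> 'b" and g :: "'b \<Rightarrow> 'c" and \<sigma>
    show "map_tm (g \<circ> f) \<sigma> = map_tm g (map_tm f \<sigma>)" by (simp add: tm.map_comp)
  next
    fix A :: "'a set" and leA and B :: "'b set" and leB f assume h: "po A leA \<and> po B leB \<and> emb A leA B leB f"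
    then have q: "quasi_emb A leA B leB f" and m: "\<forall>x\<in>A. \<forall>y\<in>A. leA x y \<longrightarrow> leB (f x) (f y)"
      unfolding emb_def by auto
    show "emb (Wa A) (tle leA) (Wb B) (tle leB) (map_tm f)" unfolding emb_def
    proof (intro conjI ballI impI)
      show "quasi_emb (Wa A) (tle leA) (Wb B) (tle leB) (map_tm f)" using qe[OF q] .
    next
      fix x y assume "x \<in> Wa A" "y \<in> Wa A" "tle leA x y"
      then show "tle leB (map_tm f x) (map_tm f y)" using tle_map[of leA x y leB f] m Wa_sub by blast
    qed
  next
    fix A :: "'a set" and leA \<sigma> assume "po A leA" "\<sigma> \<in> Wa A"
    then show "finite (set_tm \<sigma>)" "set_tm \<sigma> \<subseteq> A" using finite_set_tm Wa_sub by auto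
  next
    fix f :: "'a \<Rightarrow> 'b" and \<sigma>
    show "set_tm (map_tm f \<sigma>) = f ` set_tm \<sigma>" by (simp add: tm.set_map)
  next
    fix A :: "'a set" and leA and B :: "'b set" and leB f assume h: "po A leA \<and> po B leB \<and> emb A leA B leB f"
    then have f: "f \<in> A \<rightarrow> B" unfolding emb_def quasi_emb_def by auto
    show "map_tm f ` Wa A = {\<tau> \<in> Wb B. set_tm \<tau> \<subseteq> f ` A}"
    proof
      show "map_tm f ` Wa A \<subseteq> {\<tau> \<in> Wb B. set_tm \<tau> \<subseteq> f ` A}"
      proof
        fix \<tau> assume "\<tau> \<in> map_tm f ` Wa A"
        then obtain \<sigma> where s: "\<sigma> \<in> Wa A" "\<tau> = map_tm f \<sigma>" by blast
        have "set_tm \<sigma> \<subseteq> A" using Wa_sub[OF s(1)] .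
        then show "\<tau> \<in> {\<tau> \<in> Wb B. set_tm \<tau> \<subseteq> f ` A}" using map_ab[OF f s(1)] s(2)
          by (auto simp: tm.set_map)
      qed
    next
      show "{\<tau> \<in> Wb B. set_tm \<tau> \<subseteq> f ` A} \<subseteq> map_tm f ` Wa A"
      proof
        fix \<tau> assume "\<tau> \<in> {\<tau> \<in> Wb B. set_tm \<tau> \<subseteq> f ` A}"
        then have t: "\<tau> \<in> Wb B" "set_tm \<tau> \<subseteq> f ` A" by auto
        have "\<tau> = map_tm f (map_tm (inv_into A f) \<tau>)" using map_pre[OF t(2)] by simp
        moreover have "map_tm (inv_into A f) \<tau> \<in> Wa A" using pre_ba[OF t] .
        ultimately show "\<tau> \<in> map_tm f ` Wa A" by blast
      qed
    qed
  next
    fix leA :: "'a \<Rightarrow> 'a \<Rightarrow> bool" and \<sigma> \<tau> assume "tle leA \<sigma> \<tau>"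
    then show "fin_le leA (set_tm \<sigma>) (set_tm \<tau>)" by (rule tle_fin_le)
  qed
qed

lemma Tminus_sub: "Tminus (Suc n) A \<subseteq> Tset (Suc n) A"
  unfolding Tminus_def by (auto intro: Tset.intros)

lemma Tminus_map:
  assumes f: "f \<in> A \<rightarrow> B" and t: "t \<in> Tminus (Suc n) A"
  shows "map_tm f t \<in> Tminus (Suc n) B"
proof -
  from t consider (v) x where "t = Var x" "x \<in> A" | (nd) \<sigma> where "t = Node 0 \<sigma>" "set_mset \<sigma> \<subseteq> Tset (Suc n) A"
    unfolding Tminus_def by blast
  then show ?thesis
  proof cases
    case v
    then have "f x \<in> B" using f by blast
    then show ?thesis using v unfolding Tminus_def by simp
  next
    case nd
    have "set_mset (image_mset (map_tm f) \<sigma>) \<subseteq> Tset (Suc n) B"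
      using nd(2) Tset_map[OF f] by auto
    then show ?thesis using nd(1) unfolding Tminus_def by simp
  qed
qed

lemma Tminus_pre:
  assumes t: "t \<in> Tminus (Suc n) B" and s: "set_tm t \<subseteq> f ` A"
  shows "map_tm (inv_into A f) t \<in> Tminus (Suc n) A"
proof -
  from t consider (v) x where "t = Var x" "x \<in> B" | (nd) \<sigma> where "t = Node 0 \<sigma>" "set_mset \<sigma> \<subseteq> Tset (Suc n) B"
    unfolding Tminus_def by blast
  then show ?thesis
  proof cases
    case v
    then have "inv_into A f x \<in> A" using s by (auto intro: inv_into_into)
    then show ?thesis using v unfolding Tminus_def by simp
  next
    case nd
    have "set_mset (image_mset (map_tm (inv_into A f)) \<sigma>) \<subseteq> Tset (Suc n) A"
    proof
      fix u assume "u \<in> set_mset (image_mset (map_tm (inv_into A f)) \<sigma>)"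
      then obtain v where v: "v \<in># \<sigma>" "u = map_tm (inv_into A f) v" by auto
      have "set_tm v \<subseteq> f ` A" using s nd(1) v(1) by auto
      then show "u \<in> Tset (Suc n) A" using Tset_pre[of v "Suc n" B f A] nd(2) v by auto
    qed
    then show ?thesis using nd(1) unfolding Tminus_def by simp
  qed
qed

lemma T_dil: "normal_PO_dilator (Tset n) tle set_tm (Tset n) tle set_tm map_tm map_tm map_tm map_tm"
proof (rule dilator_generic)
  show "set_tm t \<subseteq> A" if "t \<in> Tset n A" for A :: "'a set" and t
    using that Tset_set by blast
  show "map_tm f t \<in> Tset n B" if "f \<in> A \<rightarrow> B" "t \<in> Tset n A" for A :: "'a set" and B :: "'b set" and f t
    using Tset_map that by blast
  show "map_tm (inv_into A f) t \<in> Tset n A" if "t \<in> Tset n B" "set_tm t \<subseteq> f ` A" for A :: "'a set" and B :: "'b set" and f t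
    using Tset_pre that by blast
qed

lemma Tm_dil: "normal_PO_dilator (Tminus (Suc n)) tle set_tm (Tminus (Suc n)) tle set_tm
            map_tm map_tm map_tm map_tm"
proof (rule dilator_generic)
  show "set_tm t \<subseteq> A" if "t \<in> Tminus (Suc n) A" for A :: "'a set" and t
    using that Tminus_sub Tset_set by blast
  show "map_tm f t \<in> Tminus (Suc n) B" if "f \<in> A \<rightarrow> B" "t \<in> Tminus (Suc n) A" for A :: "'a set" and B :: "'b set" and f t
    using Tminus_map that by blast
  show "map_tm (inv_into A f) t \<in> Tminus (Suc n) A" if "t \<in> Tminus (Suc n) B" "set_tm t \<subseteq> f ` A" for A :: "'a set" and B :: "'b set" and f t
    using Tminus_pre that by blast
qed

theorem proposition5p5:
  fixes n :: nat
  shows "normal_PO_dilator (Tset n) tle set_tm (Tset n) tle set_tm map_tm map_tm map_tm map_tm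
       \<and> normal_PO_dilator (Tminus (Suc n)) tle set_tm (Tminus (Suc n)) tle set_tm
            map_tm map_tm map_tm map_tm"
  using T_dil Tm_dil by blast

end
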